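(* Let $\mathbf{B}$ be a binomial ring, $n\ge0$, and $X$ a finite set. In the category $\mathbb{Q}\otimes_{\mathbb Z}\mathfrak{Laby}^n$, $$I_X=\sum_{S}\frac{1}{\deg S}\,S,$$ where $S$ ranges over the pure mazes $X\to X$ consisting, for each $x\in X$, of $d_x\ge1$ passages $x\xrightarrow1x$, with $\sum_xd_x=n$, and $\deg S=\prod_xd_x!$.
   Context: Binomial ring: commutative unital, torsion-free, $\binom ak\in\mathbf{B}$ for $a\in\mathbf{B}$, $k\ge0$. A passage $p\colon x\to y$ carries label $\overline p\in\mathbf{B}$; a maze $P\colon X\to Y$ between finite sets is a finite multi-set of passages with every element of $X$ a source and of $Y$ a target; $I_X=\{x\xrightarrow1x:x\in X\}$. $\mathfrak{Laby}$: objects formal finite direct sums of finite sets; morphisms generated by mazes modulo $P\cup\{x\xrightarrow0y\}=0$ and $P\cup\{x\xrightarrow{a+b}y\}=P\cup\{x\xrightarrow ay\}+P\cup\{x\xrightarrow by\}+P\cup\{x\xrightarrow ay,x\xrightarrow by\}$; composition $P\circ Q=\sum_{U\sqsubseteq P\boxtimes Q}U$ ($U$ a sub-multi-set of composable pairs using every passage occurrence of $P$ and $Q$, read as maze with passages $x\xrightarrow{\overline p\overline q}z$). $\mathfrak{Laby}_n$: quotient by $P=0$ if $|P|>n$ and $P=\sum_d\prod_p\binom{\overline p}{d_p}I_d$ ($d_p\ge1$ on passage occurrences $p$; $I_d$ has $d_p$ label-$1$ passages from source to target of $p$). $a\boxdot P$: all labels multiplied by $a\in\mathbb{Q}\otimes\mathbf{B}$.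 $\mathfrak{Laby}^n$: image of $\mathfrak{Laby}_n$ in $\mathbb{Q}\otimes_{\mathbb Z}\mathfrak{Laby}_n$ modulo the ideal generated by all $a^nP-a\boxdot P$, $a\in\mathbb{Q}\otimes\mathbf{B}$. *)

theory Defs
  imports "HOL-Library.Multiset"
begin

text \<open>Hom-spaces of the (Q-tensored) labyrinth category over the
label ring K = Q (x) B are modelled as K-valued finitely supported functions on mazes.\<close>

type_synonym ('a,'k) passage = "'a \<times> 'a \<times> 'k"
type_synonym ('a,'k) maze = "('a,'k) passage multiset"
type_synonym ('a,'k) comb = "('a,'k) maze \<Rightarrow> 'k"

definition psrc :: "('a,'k) passage \<Rightarrow> 'a" where "psrc p = fst p"
definition ptgt :: "('a,'k) passage \<Rightarrow> 'a" where "ptgt p = fst (snd p)"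
definition plab :: "('a,'k) passage \<Rightarrow> 'k" where "plab p = snd (snd p)"

definition is_maze :: "'a set \<Rightarrow> 'a set \<Rightarrow> ('a,'k) maze \<Rightarrow> bool" where
  "is_maze X Y P \<longleftrightarrow>
     (\<forall>p\<in>#P. psrc p \<in> X \<and> ptgt p \<in> Y) \<and>
     (\<forall>x\<in>X. \<exists>p\<in>#P. psrc p = x) \<and> (\<forall>y\<in>Y. \<exists>p\<in>#P. ptgt p = y)"

definition sgl :: "('a,'k) maze \<Rightarrow> ('a,'k::zero_neq_one) comb" where
  "sgl P = (\<lambda>R. if R = P then 1 else 0)"

definition natinv :: "nat \<Rightarrow> 'k::comm_ring_1" where
  "natinv m = (THE y. of_nat m * y = 1)"

definition binomK :: "'k::comm_ring_1 \<Rightarrow> nat \<Rightarrow> 'k" where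
  "binomK a k = (\<Prod>i<k. a - of_nat i) * natinv (fact k)"

text \<open>P o Q for Q : X -> Y and P : Y -> Z: sum over all sets U of composable pairs of
passage occurrences (p of P, q of Q, target q = source p) such that every occurrence of
P and of Q is used; U is read as the maze with passages x -> z labelled (label p)(label q).
Occurrences are enumerated through an arbitrary list representation of the multisets
(the result does not depend on the choice).\<close>

definition maze_comp :: "('a,'k::comm_ring_1) maze \<Rightarrow> ('a,'k) maze \<Rightarrow> ('a,'k) comb" where
  "maze_comp P Q = (let ps = (SOME xs. mset xs = P); qs = (SOME xs. mset xs = Q);
     C = {(i,j). i < length ps \<and> j < length qs \<and> psrc (ps!i) = ptgt (qs!j)};
     Us = {U. U \<subseteq> C \<and> fst ` U = {..<length ps} \<and> snd ` U = {..<length qs}};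
     res = (\<lambda>U. image_mset (\<lambda>(i,j). (psrc (qs!j), ptgt (ps!i), plab (ps!i) * plab (qs!j)))
                   (mset_set U))
   in (\<lambda>R. of_nat (card {U \<in> Us. res U = R})))"

definition comp :: "('a,'k::comm_ring_1) comb \<Rightarrow> ('a,'k) comb \<Rightarrow> ('a,'k) comb" where
  "comp f g = (\<lambda>R. \<Sum>P\<in>{P. f P \<noteq> 0}. \<Sum>Q\<in>{Q. g Q \<noteq> 0}. f P * g Q * maze_comp P Q R)"

text \<open>Right-hand side of the Laby_n relation P = sum_d prod_p binom(label p, d_p) I_d;
terms with sum d_p > n are omitted since those I_d are already zero in Laby_n.\<close>

definition expand :: "nat \<Rightarrow> ('a,'k::comm_ring_1) maze \<Rightarrow> ('a,'k) comb" where
  "expand n P = (let ps = (SOME xs. mset xs = P);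
     D = {d::nat list. length d = length ps \<and> (\<forall>i<length ps. 1 \<le> d!i) \<and> sum_list d \<le> n};
     Id = (\<lambda>d. \<Sum>i<length ps. replicate_mset (d!i) (psrc (ps!i), ptgt (ps!i), 1));
     cf = (\<lambda>d. \<Prod>i<length ps. binomK (plab (ps!i)) (d!i))
   in (\<lambda>R. \<Sum>d\<in>D. if Id d = R then cf d else 0))"

definition lscale :: "'k::times \<Rightarrow> ('a,'k) maze \<Rightarrow> ('a,'k) maze" where
  "lscale a P = image_mset (\<lambda>(x,y,l). (x,y,a*l)) P"

definition gen_rel :: "nat \<Rightarrow> 'a set \<Rightarrow> 'a set \<Rightarrow> ('a,'k::comm_ring_1) comb \<Rightarrow> bool" where
  "gen_rel n X Y f \<longleftrightarrow>
     (\<exists>P x y. is_maze X Y (add_mset (x,y,0) P) \<and> f = sgl (add_mset (x,y,0) P))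
   \<or> (\<exists>P x y a b. is_maze X Y (add_mset (x,y,a+b) P) \<and>
        f = (\<lambda>R. sgl (add_mset (x,y,a+b) P) R - sgl (add_mset (x,y,a) P) R
                 - sgl (add_mset (x,y,b) P) R - sgl (add_mset (x,y,a) (add_mset (x,y,b) P)) R))
   \<or> (\<exists>P. is_maze X Y P \<and> n < size P \<and> f = sgl P)
   \<or> (\<exists>P. is_maze X Y P \<and> f = (\<lambda>R. sgl P R - expand n P R))
   \<or> (\<exists>a P. is_maze X Y P \<and> f = (\<lambda>R. a ^ n * sgl P R - sgl (lscale a P) R))"

text \<open>The two-sided ideal (family of K-submodules of the hom-spaces between finite sets,
closed under composition with arbitrary morphisms) generated by the relations.\<close>

inductive in_ideal :: "nat \<Rightarrow> 'a set \<Rightarrow> 'a set \<Rightarrow> ('a,'k::comm_ring_1) comb \<Rightarrow> bool"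
  for n :: nat where
  gen: "finite X \<Longrightarrow> finite Y \<Longrightarrow> gen_rel n X Y f \<Longrightarrow> in_ideal n X Y f"
| zero: "in_ideal n X Y (\<lambda>_. 0)"
| add: "in_ideal n X Y f \<Longrightarrow> in_ideal n X Y g \<Longrightarrow> in_ideal n X Y (\<lambda>R. f R + g R)"
| smul: "in_ideal n X Y f \<Longrightarrow> in_ideal n X Y (\<lambda>R. c * f R)"
| compose: "in_ideal n U V f \<Longrightarrow> finite X \<Longrightarrow> finite Y \<Longrightarrow> is_maze V Y P \<Longrightarrow> is_maze X U Q
      \<Longrightarrow> in_ideal n X Y (comp (sgl P) (comp f (sgl Q)))"

definition identity_maze :: "'a set \<Rightarrow> ('a,'k::one) maze" where
  "identity_maze X = mset_set ((\<lambda>x. (x, x, 1)) ` X)"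

definition pure_degs :: "nat \<Rightarrow> 'a set \<Rightarrow> ('a \<Rightarrow> nat) set" where
  "pure_degs n X = {d. (\<forall>x\<in>X. 1 \<le> d x) \<and> (\<forall>x. x \<notin> X \<longrightarrow> d x = 0) \<and> (\<Sum>x\<in>X. d x) = n}"

definition pure_maze :: "'a set \<Rightarrow> ('a \<Rightarrow> nat) \<Rightarrow> ('a,'k::one) maze" where
  "pure_maze X d = (\<Sum>x\<in>X. replicate_mset (d x) (x, x, 1))"

end

theory Submission
  imports Defs "HOL-Computational_Algebra.Polynomial"
begin

definition Eop :: "nat \<Rightarrow> (int \<Rightarrow> int) \<Rightarrow> int" where
  "Eop n f = (\<Sum>j\<le>n. (-1)^j * int (n choose j) * f (int j))"

lemma Eop_diff: "Eop n (\<lambda>x. f x - g x) = Eop n f - Eop n g"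
  unfolding Eop_def by (simp add: algebra_simps sum_subtractf)

lemma Eop_Suc: "Eop (Suc n) f = Eop n f - Eop n (\<lambda>x. f (x+1))"
proof -
  have "Eop (Suc n) f = f 0 + (\<Sum>k\<le>n. (-1)^(Suc k) * int (Suc n choose Suc k) * f (int (Suc k)))"
    unfolding Eop_def by (subst sum.atMost_Suc_shift) simp
  also have "\<dots> = f 0 + (\<Sum>k\<le>n. (-1)^(Suc k) * int (n choose Suc k) * f (int (Suc k)))
        - (\<Sum>k\<le>n. (-1)^k * int (n choose k) * f (int k + 1))"
    by (simp add: algebra_simps sum.distrib sum_subtractf sum_negf)
  also have "f 0 + (\<Sum>k\<le>n. (-1)^(Suc k) * int (n choose Suc k) * f (int (Suc k))) = Eop n f"
  proof -
    have "Eop n f = (\<Sum>j\<le>Suc n. (-1)^j * int (n choose j) * f (int j))"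
      unfolding Eop_def by simp
    also have "\<dots> = f 0 + (\<Sum>k\<le>n. (-1)^(Suc k) * int (n choose Suc k) * f (int (Suc k)))"
      by (subst sum.atMost_Suc_shift) simp
    finally show ?thesis by simp
  qed
  finally show ?thesis unfolding Eop_def by simp
qed

definition dpoly :: "int poly \<Rightarrow> int poly" where
  "dpoly p = pcompose p [:1,1:] - p"

lemma poly_dpoly: "poly (dpoly p) x = poly p (x+1) - poly p x"
  by (simp add: dpoly_def poly_pcompose add.commute)

lemma coeff_pcomp_shift:
  assumes "degree (p::int poly) \<le> m" shows "coeff (pcompose p [:1,1:]) m = coeff p m"
proof (cases "degree p = m")
  case True
  have "lead_coeff (pcompose p [:1,1:]) = lead_coeff p"
    by (subst lead_coeff_comp) auto
  moreover have "degree (pcompose p [:1,1:]) = degree p" by (simp add: degree_pcompose)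
  ultimately show ?thesis using True by simp
next
  case False
  then have "degree p < m" using assms by simp
  moreover have "degree (pcompose p [:1,1:]) = degree p" by (simp add: degree_pcompose)
  ultimately show ?thesis by (simp add: coeff_eq_0)
qed

lemma dpoly_pCons: "dpoly (pCons a p) = pCons 0 (dpoly p) + pcompose p [:1,1:]"
  unfolding dpoly_def
  by (simp add: pcompose_pCons algebra_simps)

lemma dpoly_main: "degree p \<le> Suc n \<Longrightarrow> degree (dpoly p) \<le> n \<and> coeff (dpoly p) n = int (Suc n) * coeff p (Suc n)"
proof (induction n arbitrary: p)
  case 0
  obtain a q where p: "p = pCons a q" by (cases p) auto
  have "degree q = 0" using 0 p by (cases "q = 0") auto
  then obtain c where q: "q = [:c:]" by (metis degree_eq_zeroE)
  have "dpoly p = [:c:]" unfolding p q dpoly_pCons by (simp add: dpoly_def)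
  then show ?case using p q by simp
next
  case (Suc m)
  obtain a q where p: "p = pCons a q" by (cases p) auto
  have dq: "degree q \<le> Suc m" using Suc.prems p by (cases "q = 0") auto
  from Suc.IH[OF dq] have ih: "degree (dpoly q) \<le> m" "coeff (dpoly q) m = int (Suc m) * coeff q (Suc m)" by auto
  have dc: "degree (pcompose q [:1,1:]) \<le> Suc m" using dq by (simp add: degree_pcompose)
  have "degree (pCons 0 (dpoly q)) \<le> Suc m"
    using ih(1) by (metis Suc_le_mono degree_pCons_le le_trans)
  then have "degree (dpoly p) \<le> Suc m" unfolding p dpoly_pCons using dc
    by (meson degree_add_le)
  moreover have "coeff (dpoly p) (Suc m) = int (Suc (Suc m)) * coeff p (Suc (Suc m))"
    unfolding p dpoly_pCons using ih(2) coeff_pcomp_shift[OF dq] by (simp add: algebra_simps)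
  ultimately show ?case by simp
qed

lemma Eop_poly: "degree p \<le> n \<Longrightarrow> Eop n (poly p) = (-1)^n * fact n * coeff p n"
proof (induction n arbitrary: p)
  case 0
  then show ?case by (simp add: Eop_def poly_0_coeff_0)
next
  case (Suc n)
  have "Eop (Suc n) (poly p) = - Eop n (poly (dpoly p))"
  proof -
    have "Eop n (poly (dpoly p)) = Eop n (\<lambda>x. poly p (x+1) - poly p x)"
      by (rule arg_cong[where f="Eop n"]) (simp add: poly_dpoly fun_eq_iff)
    then show ?thesis by (simp add: Eop_Suc Eop_diff)
  qed
  also have "\<dots> = - ((-1)^n * fact n * (int (Suc n) * coeff p (Suc n)))"
    using dpoly_main[OF Suc.prems] Suc.IH by simp
  also have "\<dots> = (-1)^(Suc n) * fact (Suc n) * coeff p (Suc n)"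
    by (simp add: algebra_simps)
  finally show ?case .
qed


definition ffp :: "nat \<Rightarrow> int poly" where "ffp k = (\<Prod>i<k. [:- int i, 1:])"

lemma ffp_poly: "poly (ffp k) y = (\<Prod>i<k. y - int i)"
  by (simp add: ffp_def poly_prod)

lemma ffp_deg: "degree (ffp k) = k" and ffp_lc: "lead_coeff (ffp k) = 1"
proof -
  have "degree (ffp k) = (\<Sum>i<k. degree [:- int i, 1:])"
    unfolding ffp_def by (rule degree_prod_eq_sum_degree) auto
  then show "degree (ffp k) = k" by simp
  show "lead_coeff (ffp k) = 1" unfolding ffp_def lead_coeff_prod by simp
qed

lemma ffp_nz: "ffp k \<noteq> 0"
  using ffp_lc[of k] by auto

lemma Qcoeff:
  assumes fin: "finite X" and le: "(\<Sum>x\<in>X. d x) \<le> n"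
  shows "coeff (\<Prod>x\<in>X. ffp (d x)) n = (if (\<Sum>x\<in>X. d x) = n then 1 else 0)"
proof -
  have deg: "degree (\<Prod>x\<in>X. ffp (d x)) = (\<Sum>x\<in>X. d x)"
    by (subst degree_prod_eq_sum_degree) (auto simp: ffp_nz ffp_deg)
  have lc: "lead_coeff (\<Prod>x\<in>X. ffp (d x)) = 1" by (simp add: lead_coeff_prod ffp_lc)
  show ?thesis using deg lc le by (auto simp: coeff_eq_0)
qed

lemma Qdeg:
  assumes "finite X" shows "degree (\<Prod>x\<in>X. ffp (d x)) = (\<Sum>x\<in>X. d x)"
  by (subst degree_prod_eq_sum_degree) (auto simp: ffp_nz ffp_deg)

lemma natinv_eq:
  assumes "of_nat m * y = (1::'k::comm_ring_1)" shows "natinv m = y"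
proof -
  have u: "\<And>z. of_nat m * z = (1::'k) \<Longrightarrow> z = y"
  proof -
    fix z assume z: "of_nat m * z = (1::'k)"
    have "z = z * (of_nat m * y)" using assms by simp
    also have "\<dots> = (of_nat m * z) * y" by (simp add: algebra_simps)
    finally show "z = y" using z by simp
  qed
  show ?thesis unfolding natinv_def using assms u by (rule the_equality)
qed

lemma natinv_mult:
  assumes "\<forall>m::nat. 0 < m \<longrightarrow> (\<exists>y::'k::comm_ring_1. of_nat m * y = 1)" "0 < m"
  shows "of_nat m * (natinv m :: 'k) = 1"
  using assms natinv_eq by metis

lemma natinv_prod:
  assumes q: "\<forall>m::nat. 0 < m \<longrightarrow> (\<exists>y::'k::comm_ring_1. of_nat m * y = 1)"
    and pos: "\<And>x. x \<in> A \<Longrightarrow> 0 < f x"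
  shows "(natinv (\<Prod>x\<in>A. f x) :: 'k) = (\<Prod>x\<in>A. natinv (f x))"
proof (rule natinv_eq)
  have "of_nat (\<Prod>x\<in>A. f x) * (\<Prod>x\<in>A. natinv (f x) :: 'k) = (\<Prod>x\<in>A. of_nat (f x) * natinv (f x))"
    by (simp add: prod.distrib)
  also have "\<dots> = 1" using natinv_mult[OF q] pos by (simp add: prod.neutral)
  finally show "of_nat (\<Prod>x\<in>A. f x) * (\<Prod>x\<in>A. natinv (f x) :: 'k) = 1" .
qed

lemma binomK_nat: "binomK (of_nat j :: 'k::comm_ring_1) k = of_int (poly (ffp k) (int j)) * natinv (fact k)"
  by (simp add: binomK_def ffp_poly of_int_prod)

lemma prod_binomK_nat:
  "(\<Prod>x\<in>X. binomK (of_nat j :: 'k::comm_ring_1) (d x))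
     = of_int (poly (\<Prod>x\<in>X. ffp (d x)) (int j)) * (\<Prod>x\<in>X. natinv (fact (d x)))"
  by (simp add: binomK_nat prod.distrib poly_prod of_int_prod)


lemma in_ideal_sum:
  assumes "finite J" "\<And>j. j \<in> J \<Longrightarrow> in_ideal n X Y (f j)"
  shows "in_ideal n X Y (\<lambda>R. \<Sum>j\<in>J. c j * f j R)"
  using assms
proof (induction J rule: finite_induct)
  case empty
  then show ?case by (simp add: in_ideal.zero)
next
  case (insert j J)
  have a: "in_ideal n X Y (\<lambda>R. c j * f j R)" using insert by (intro in_ideal.smul) auto
  have b: "in_ideal n X Y (\<lambda>R. \<Sum>j\<in>J. c j * f j R)" using insert by auto
  show ?case using in_ideal.add[OF a b] insert by simp
qed

lemma in_ideal_cong: "in_ideal n X Y f \<Longrightarrow> f = g \<Longrightarrow> in_ideal n X Y g" by simp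

lemma lscale_id: "finite X \<Longrightarrow> lscale (a::'k::monoid_mult) (identity_maze X) = mset_set ((\<lambda>x. (x,x,a)) ` X)"
  unfolding lscale_def identity_maze_def
  by (subst image_mset_mset_set) (auto simp: inj_on_def image_image image_iff)

lemma is_maze_id: "finite X \<Longrightarrow> is_maze X X (mset_set ((\<lambda>x. (x,x,a)) ` X))"
  unfolding is_maze_def psrc_def ptgt_def by auto

lemma gen_step:
  fixes a :: "'k::comm_ring_1"
  assumes "finite X"
  shows "in_ideal n X X (\<lambda>R. a ^ n * sgl (identity_maze X) R - expand n (lscale a (identity_maze X)) R)"
proof -
  let ?I = "identity_maze X :: ('a,'k) maze"
  let ?L = "lscale a ?I"
  have mI: "is_maze X X ?I" using is_maze_id[OF assms, of 1] by (simp add: identity_maze_def)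
  have mL: "is_maze X X ?L" using is_maze_id[OF assms, of a] lscale_id[OF assms, of a] by simp
  have g1: "in_ideal n X X (\<lambda>R. a ^ n * sgl ?I R - sgl ?L R)"
    by (rule in_ideal.gen) (use assms mI in \<open>auto simp: gen_rel_def\<close>)
  have g2: "in_ideal n X X (\<lambda>R. sgl ?L R - expand n ?L R)"
    by (rule in_ideal.gen) (use assms mL in \<open>auto simp: gen_rel_def\<close>)
  show ?thesis using in_ideal.add[OF g1 g2] by simp
qed


definition Dp :: "nat \<Rightarrow> 'a set \<Rightarrow> ('a \<Rightarrow> nat) set" where
  "Dp n X = {d. (\<forall>x\<in>X. 1 \<le> d x) \<and> (\<forall>x. x \<notin> X \<longrightarrow> d x = 0) \<and> (\<Sum>x\<in>X. d x) \<le> n}"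

lemma Dp_finite: "finite X \<Longrightarrow> finite (Dp n X)"
proof -
  assume f: "finite X"
  have "Dp n X \<subseteq> {f. \<forall>x. (x \<in> X \<longrightarrow> f x \<in> {..n}) \<and> (x \<notin> X \<longrightarrow> f x = 0)}"
  proof
    fix d assume d: "d \<in> Dp n X"
    have "\<And>x. x \<in> X \<Longrightarrow> d x \<le> n"
      using d f unfolding Dp_def by (auto intro: order_trans[OF member_le_sum])
    then show "d \<in> {f. \<forall>x. (x \<in> X \<longrightarrow> f x \<in> {..n}) \<and> (x \<notin> X \<longrightarrow> f x = 0)}"
      using d unfolding Dp_def by auto
  qed
  then show ?thesis using finite_set_of_finite_funs[OF f, of "{..n}" 0] finite_subset by blast
qed

lemma nth_img: "nth xs ` {..<length xs} = set xs"
  by (auto simp: set_conv_nth)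

lemma sum_set_nth: "distinct xs \<Longrightarrow> (\<Sum>x\<in>set xs. F x) = (\<Sum>i<length xs. F (xs!i))"
  by (subst nth_img[symmetric], subst sum.reindex) (auto intro: inj_on_nth)

lemma prod_set_nth: "distinct xs \<Longrightarrow> (\<Prod>x\<in>set xs. F x) = (\<Prod>i<length xs. F (xs!i))"
  by (subst nth_img[symmetric], subst prod.reindex) (auto intro: inj_on_nth)

lemma the_idx1: "distinct xs \<Longrightarrow> i < length xs \<Longrightarrow> (THE k. k < length xs \<and> xs!k = xs!i) = i"
  by (rule the_equality) (auto simp: nth_eq_iff_index_eq)

lemma the_idx2: "distinct xs \<Longrightarrow> x \<in> set xs \<Longrightarrow>
   (THE k. k < length xs \<and> xs!k = x) < length xs \<and> xs!(THE k. k < length xs \<and> xs!k = x) = x"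
  by (rule theI') (rule distinct_Ex1)

lemma expand_list:
  fixes a :: "'k::comm_ring_1"
  assumes ps: "ps = map (\<lambda>x. (x,x,a)) xs" and dist: "distinct xs"
  shows "(\<Sum>dl\<in>{dl. length dl = length ps \<and> (\<forall>i<length ps. 1 \<le> dl!i) \<and> sum_list dl \<le> n}.
            if (\<Sum>i<length ps. replicate_mset (dl!i) (psrc (ps!i), ptgt (ps!i), 1)) = R
            then (\<Prod>i<length ps. binomK (plab (ps!i)) (dl!i)) else 0)
       = (\<Sum>d\<in>Dp n (set xs). (\<Prod>x\<in>set xs. binomK a (d x)) * sgl (pure_maze (set xs) d) R)"
proof -
  define L where "L = length xs"
  define phi where "phi = (\<lambda>dl x. if x \<in> set xs then dl ! (THE k. k < length xs \<and> xs!k = x) else (0::nat))"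
  have phi_nth: "\<And>dl i. i < L \<Longrightarrow> phi dl (xs!i) = dl!i"
    unfolding phi_def L_def using the_idx1[OF dist] by auto
  have map_phi: "\<And>dl. length dl = L \<Longrightarrow> map (phi dl) xs = dl"
    by (rule nth_equalityI) (auto simp: phi_nth L_def)
  have sum_phi: "\<And>dl. length dl = L \<Longrightarrow> (\<Sum>x\<in>set xs. phi dl x) = sum_list dl"
    using dist by (simp add: sum_set_nth phi_nth L_def sum_list_sum_nth lessThan_atLeast0)
  have phi_map: "\<And>d. d \<in> Dp n (set xs) \<Longrightarrow> phi (map d xs) = d"
  proof (rule ext)
    fix d x assume d: "d \<in> Dp n (set xs)"
    show "phi (map d xs) x = d x"
    proof (cases "x \<in> set xs")
      case True then show ?thesis using the_idx2[OF dist True] unfolding phi_def by simp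
    next
      case False then show ?thesis using d unfolding phi_def Dp_def by simp
    qed
  qed
  show ?thesis
  proof (rule sum.reindex_bij_witness[where i="\<lambda>d. map d xs" and j=phi])
    fix dl assume "dl \<in> {dl. length dl = length ps \<and> (\<forall>i<length ps. 1 \<le> dl!i) \<and> sum_list dl \<le> n}"
    then have dl: "length dl = L" "\<forall>i<L. 1 \<le> dl!i" "sum_list dl \<le> n" using ps L_def by auto
    show "map (phi dl) xs = dl" using map_phi dl by simp
    show "phi dl \<in> Dp n (set xs)"
      unfolding Dp_def using dl sum_phi[OF dl(1)]
      by (auto simp: phi_def set_conv_nth L_def the_idx1[OF dist])
    have e1: "(\<Prod>x\<in>set xs. binomK a (phi dl x)) = (\<Prod>i<length ps. binomK (plab (ps!i)) (dl!i))"
      using dist by (simp add: prod_set_nth phi_nth ps plab_def L_def)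
    have e2: "pure_maze (set xs) (phi dl) = (\<Sum>i<length ps. replicate_mset (dl!i) (psrc (ps!i), ptgt (ps!i), 1))"
      using dist by (simp add: pure_maze_def sum_set_nth phi_nth ps psrc_def ptgt_def L_def)
    show "(\<Prod>x\<in>set xs. binomK a (phi dl x)) * sgl (pure_maze (set xs) (phi dl)) R =
         (if (\<Sum>i<length ps. replicate_mset (dl!i) (psrc (ps!i), ptgt (ps!i), 1)) = R
            then (\<Prod>i<length ps. binomK (plab (ps!i)) (dl!i)) else 0)"
      unfolding e1 e2 sgl_def by auto
  next
    fix d assume d: "d \<in> Dp n (set xs)"
    show "phi (map d xs) = d" using phi_map[OF d] .
    have "sum_list (map d xs) = (\<Sum>x\<in>set xs. d x)" using dist by (simp add: sum_list_distinct_conv_sum_set)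
    then show "map d xs \<in> {dl. length dl = length ps \<and> (\<forall>i<length ps. 1 \<le> dl!i) \<and> sum_list dl \<le> n}"
      using d ps unfolding Dp_def by auto
  qed
qed

lemma expand_lscale:
  fixes a :: "'k::comm_ring_1"
  assumes f: "finite X"
  shows "expand n (lscale a (identity_maze X))
     = (\<lambda>R. \<Sum>d\<in>Dp n X. (\<Prod>x\<in>X. binomK a (d x)) * sgl (pure_maze X d) R)"
proof -
  let ?M = "lscale a (identity_maze X)"
  define ps where "ps = (SOME xs. mset xs = ?M)"
  have mps: "mset ps = ?M" unfolding ps_def by (rule someI_ex) (rule ex_mset)
  have M: "?M = mset_set ((\<lambda>x. (x,x,a)) ` X)" by (rule lscale_id[OF f])
  have sps: "set ps = (\<lambda>x. (x,x,a)) ` X"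
    using mps M f by (metis finite_imageI finite_set_mset_mset_set set_mset_mset)
  have dps: "distinct ps"
  proof -
    have "\<forall>y. count (mset ps) y = (if y \<in> set ps then 1 else 0)"
      using mps M sps f by (simp add: count_mset_set')
    then show ?thesis by (simp add: distinct_count_atmost_1)
  qed
  define xs where "xs = map psrc ps"
  have psx: "ps = map (\<lambda>x. (x,x,a)) xs"
  proof (rule nth_equalityI)
    show "length ps = length (map (\<lambda>x. (x,x,a)) xs)" by (simp add: xs_def)
    fix i assume "i < length ps"
    then have "ps!i \<in> set ps" by simp
    then show "ps!i = map (\<lambda>x. (x,x,a)) xs ! i" using \<open>i < length ps\<close> sps
      by (auto simp: xs_def psrc_def)
  qed
  have dxs: "distinct xs" using dps psx by (simp add: distinct_map)
  have sxs: "set xs = X" using sps psx by auto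
  show ?thesis
    unfolding expand_def Let_def ps_def[symmetric]
    by (rule ext) (use expand_list[OF psx dxs] sxs in simp)
qed


lemma sumc:
  "(\<Sum>j\<le>n. (c::'k::comm_ring_1) * of_int ((-1)^j * int (n choose j)) * of_int (g (int j)))
     = c * of_int (Eop n g)"
  unfolding Eop_def by (simp add: of_int_sum sum_distrib_left algebra_simps)

lemma coeff_sum:
  fixes X :: "'a set"
  assumes q: "\<forall>m::nat. 0 < m \<longrightarrow> (\<exists>y::'k::comm_ring_1. of_nat m * y = 1)"
    and f: "finite X" and le: "(\<Sum>x\<in>X. d x) \<le> n"
  shows "(\<Sum>j\<le>n. (natinv (fact n) * (-1)^n :: 'k) * of_int ((-1)^j * int (n choose j))
            * (\<Prod>x\<in>X. binomK (of_nat j :: 'k) (d x)))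
        = (if (\<Sum>x\<in>X. d x) = n then natinv (\<Prod>x\<in>X. fact (d x)) else 0)"
proof -
  have fct: "(of_int (fact n :: int) :: 'k) = of_nat (fact n)" by (metis of_int_of_nat_eq of_nat_fact)
  let ?Q = "\<Prod>x\<in>X. ffp (d x)"
  let ?P = "(\<Prod>x\<in>X. natinv (fact (d x))) :: 'k"
  have "(\<Sum>j\<le>n. (natinv (fact n) * (-1)^n :: 'k) * of_int ((-1)^j * int (n choose j))
            * (\<Prod>x\<in>X. binomK (of_nat j :: 'k) (d x)))
      = (\<Sum>j\<le>n. (natinv (fact n) * (-1)^n * ?P) * of_int ((-1)^j * int (n choose j))
            * of_int (poly ?Q (int j)))"
    by (rule sum.cong) (simp_all add: prod_binomK_nat algebra_simps)
  also have "\<dots> = natinv (fact n) * (-1)^n * ?P * of_int (Eop n (poly ?Q))"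
    by (rule sumc)
  also have "Eop n (poly ?Q) = (-1)^n * fact n * coeff ?Q n"
    by (rule Eop_poly) (simp add: Qdeg[OF f] le)
  also have "natinv (fact n) * (-1)^n * ?P * of_int ((-1)^n * fact n * coeff ?Q n)
      = (of_nat (fact n) * natinv (fact n)) * ((-1)^n * (-1)^n) * ?P * of_int (coeff ?Q n)"
    using fct by (simp add: algebra_simps)
  also have "\<dots> = ?P * of_int (coeff ?Q n)"
    using natinv_mult[OF q, of "fact n"] by (simp add: power_mult_distrib[symmetric])
  also have "?P = natinv (\<Prod>x\<in>X. fact (d x))"
    by (rule natinv_prod[OF q, symmetric]) simp
  finally show ?thesis by (simp add: Qcoeff[OF f le])
qed

lemma coeff_id:
  assumes q: "\<forall>m::nat. 0 < m \<longrightarrow> (\<exists>y::'k::comm_ring_1. of_nat m * y = 1)"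
  shows "(\<Sum>j\<le>n. (natinv (fact n) * (-1)^n :: 'k) * of_int ((-1)^j * int (n choose j))
            * (of_nat j :: 'k) ^ n) = 1"
proof -
  have fct: "(of_int (fact n :: int) :: 'k) = of_nat (fact n)" by (metis of_int_of_nat_eq of_nat_fact)
  have "(\<Sum>j\<le>n. (natinv (fact n) * (-1)^n :: 'k) * of_int ((-1)^j * int (n choose j))
            * (of_nat j :: 'k) ^ n)
      = (\<Sum>j\<le>n. (natinv (fact n) * (-1)^n :: 'k) * of_int ((-1)^j * int (n choose j))
            * of_int (poly (monom 1 n) (int j)))"
    by (rule sum.cong) (simp_all add: poly_monom)
  also have "\<dots> = natinv (fact n) * (-1)^n * of_int (Eop n (poly (monom 1 n)))"
    by (rule sumc)
  also have "Eop n (poly (monom 1 n)) = (-1)^n * fact n * 1"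
    by (subst Eop_poly) (simp_all add: degree_monom_le)
  also have "natinv (fact n) * (-1)^n * of_int ((-1)^n * fact n * 1 :: int)
      = (of_nat (fact n) * natinv (fact n)) * ((-1)^n * (-1)^n :: 'k)"
    using fct by (simp add: algebra_simps)
  also have "\<dots> = 1"
    using natinv_mult[OF q, of "fact n"] by (simp add: power_mult_distrib[symmetric])
  finally show ?thesis .
qed

theorem mainTheorem18:
  fixes n :: nat and X :: "nat set"
  assumes qalg: "\<forall>m::nat. 0 < m \<longrightarrow> (\<exists>y::'k::comm_ring_1. of_nat m * y = 1)"
    and finX: "finite X"
  shows "in_ideal n X X
           (\<lambda>R. (sgl (identity_maze X) :: (nat,'k) comb) R
                - (\<Sum>d\<in>pure_degs n X. natinv (\<Prod>x\<in>X. fact (d x)) * sgl (pure_maze X d) R))"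
proof -
  let ?I = "identity_maze X :: (nat,'k) maze"
  define c :: "nat \<Rightarrow> 'k" where "c j = natinv (fact n) * (-1)^n * of_int ((-1)^j * int (n choose j))" for j
  let ?F = "\<lambda>R. \<Sum>j\<in>{..n}. c j * ((of_nat j :: 'k) ^ n * sgl ?I R - expand n (lscale (of_nat j) ?I) R)"
  have F: "in_ideal n X X ?F"
    by (rule in_ideal_sum) (auto intro: gen_step[OF finX])
  show ?thesis
  proof (rule in_ideal_cong[OF F], rule ext)
    fix R
    have "?F R = (\<Sum>j\<le>n. c j * (of_nat j :: 'k) ^ n) * sgl ?I R
        - (\<Sum>j\<le>n. \<Sum>d\<in>Dp n X. c j * (\<Prod>x\<in>X. binomK (of_nat j :: 'k) (d x)) * sgl (pure_maze X d) R)"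
      by (simp add: expand_lscale[OF finX] algebra_simps sum_subtractf sum_distrib_left sum_distrib_right)
    also have "(\<Sum>j\<le>n. c j * (of_nat j :: 'k) ^ n) = 1"
      unfolding c_def by (rule coeff_id[OF qalg])
    also have "(\<Sum>j\<le>n. \<Sum>d\<in>Dp n X. c j * (\<Prod>x\<in>X. binomK (of_nat j :: 'k) (d x)) * sgl (pure_maze X d) R)
       = (\<Sum>d\<in>Dp n X. (\<Sum>j\<le>n. c j * (\<Prod>x\<in>X. binomK (of_nat j :: 'k) (d x))) * sgl (pure_maze X d) R)"
      by (subst sum.swap) (simp add: sum_distrib_right)
    also have "\<dots> = (\<Sum>d\<in>Dp n X. (if (\<Sum>x\<in>X. d x) = n then natinv (\<Prod>x\<in>X. fact (d x)) * sgl (pure_maze X d) R else 0))"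
    proof (rule sum.cong[OF refl])
      fix d assume "d \<in> Dp n X"
      then have le: "(\<Sum>x\<in>X. d x) \<le> n" unfolding Dp_def by simp
      have "(\<Sum>j\<le>n. c j * (\<Prod>x\<in>X. binomK (of_nat j :: 'k) (d x)))
          = (if (\<Sum>x\<in>X. d x) = n then natinv (\<Prod>x\<in>X. fact (d x)) else 0)"
        unfolding c_def by (rule coeff_sum[OF qalg finX le])
      then show "(\<Sum>j\<le>n. c j * (\<Prod>x\<in>X. binomK (of_nat j :: 'k) (d x))) * sgl (pure_maze X d) R
          = (if (\<Sum>x\<in>X. d x) = n then natinv (\<Prod>x\<in>X. fact (d x)) * sgl (pure_maze X d) R else 0)"
        by simp
    qed
    also have "\<dots> = (\<Sum>d\<in>{d\<in>Dp n X. (\<Sum>x\<in>X. d x) = n}. natinv (\<Prod>x\<in>X. fact (d x)) * sgl (pure_maze X d) R)"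
      by (rule sum.inter_filter[symmetric]) (rule Dp_finite[OF finX])
    also have "{d\<in>Dp n X. (\<Sum>x\<in>X. d x) = n} = pure_degs n X"
      unfolding Dp_def pure_degs_def by auto
    finally show "?F R = sgl ?I R - (\<Sum>d\<in>pure_degs n X. natinv (\<Prod>x\<in>X. fact (d x)) * sgl (pure_maze X d) R)"
      by simp
  qed
qed

end
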